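(* Let $A$ be a non-empty set and let $f\in H_0[\ell_1(A)]_+$ be maximal. Then: (i) $f(x^* )\le f(y^* )$ whenever $x^*,y^*\in\ell_\infty(A)$ satisfy $|x^*|\le|y^*|$; (ii) $\sum_{k=1}^n f(x_k^* )\le f(\sum_{k=1}^n x_k^* )$ for every $n\in\mathbb N$ and $x_1^*,\dots,x_n^*\in\ell_\infty(A)_+$; (iii) $\|f\|_{FBL[\ell_1(A)]}=\|f\|_\infty$, where $\|f\|_\infty=\sup\{|f(x^* )|:x^*\in B_{\ell_\infty(A)}\}$.
   Context: Identify $\ell_1(A)^*$ with $\ell_\infty(A)$. $H[\ell_1(A)]$ is the vector space of positively homogeneous functions $f:\ell_\infty(A)\to\mathbb R$ ($f(\lambda x^* )=\lambda f(x^* )$ for $\lambda>0$), ordered pointwise. For $f\in H[\ell_1(A)]$, $\|f\|_{FBL[\ell_1(A)]}:=\sup\{\sum_{k=1}^n|f(x_k^* )| : n\in\mathbb N,\ x_1^*,\dots,x_n^*\in\ell_\infty(A),\ \sup_{a\in A}\sum_{k=1}^n|x_k^*(a)|\le1\}$, and $H_0[\ell_1(A)]=\{f:\|f\|_{FBL[\ell_1(A)]}<\infty\}$, with positive cone $H_0[\ell_1(A)]_+$. An element $f\in H_0[\ell_1(A)]_+$ is maximal if the only $g\in H_0[\ell_1(A)]_+$ with $g\ge f$ and $\|g\|_{FBL[\ell_1(A)]}=\|f\|_{FBL[\ell_1(A)]}$ is $g=f$. *)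

theory Defs
  imports "HOL-Analysis.Analysis"
begin

text \<open>The index set A is modelled by the (nonempty) type 'a.
  ell_inf(A) = l_1(A)^* is the set of bounded real functions on 'a.
  Functionals f on ell_inf(A) are modelled as total functions
  ('a => real) => real of which only the values on ell_inf matter.\<close>

definition linf :: "('a \<Rightarrow> real) set" where
  "linf = {x. bounded (range x)}"

definition pos_homog :: "(('a \<Rightarrow> real) \<Rightarrow> real) \<Rightarrow> bool" where
  "pos_homog f \<longleftrightarrow> (\<forall>x\<in>linf. \<forall>t::real. t > 0 \<longrightarrow> f (\<lambda>a. t * x a) = t * f x)"

definition fbl_norm :: "(('a \<Rightarrow> real) \<Rightarrow> real) \<Rightarrow> ereal" where
  "fbl_norm f = (SUP (n, xs) \<in> {(n::nat, xs::nat \<Rightarrow> 'a \<Rightarrow> real).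
        (\<forall>k<n. xs k \<in> linf) \<and> (\<forall>a. (\<Sum>k<n. \<bar>xs k a\<bar>) \<le> 1)}.
        ereal (\<Sum>k<n. \<bar>f (xs k)\<bar>))"

definition H0 :: "(('a \<Rightarrow> real) \<Rightarrow> real) set" where
  "H0 = {f. pos_homog f \<and> fbl_norm f < \<infinity>}"

definition H0_pos :: "(('a \<Rightarrow> real) \<Rightarrow> real) set" where
  "H0_pos = {f \<in> H0. \<forall>x\<in>linf. 0 \<le> f x}"

definition maximal_elem :: "(('a \<Rightarrow> real) \<Rightarrow> real) \<Rightarrow> bool" where
  "maximal_elem f \<longleftrightarrow> f \<in> H0_pos \<and>
     (\<forall>g\<in>H0_pos. (\<forall>x\<in>linf. f x \<le> g x) \<and> fbl_norm g = fbl_norm f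
        \<longrightarrow> (\<forall>x\<in>linf. g x = f x))"

definition sup_norm :: "(('a \<Rightarrow> real) \<Rightarrow> real) \<Rightarrow> ereal" where
  "sup_norm f = (SUP x \<in> {x. \<forall>a. \<bar>x a\<bar> \<le> 1}. ereal \<bar>f x\<bar>)"

end

theory Submission
  imports Defs
begin

definition SS :: "(('a \<Rightarrow> real) \<Rightarrow> real) \<Rightarrow> ('a \<Rightarrow> real) \<Rightarrow> real set" where
  "SS f x = {(\<Sum>k<(n::nat). f (ys k)) | n ys. (\<forall>k<n. ys k \<in> linf) \<and> (\<forall>a. (\<Sum>k<n. \<bar>ys k a\<bar>) \<le> \<bar>x a\<bar>)}"

definition gg :: "(('a \<Rightarrow> real) \<Rightarrow> real) \<Rightarrow> ('a \<Rightarrow> real) \<Rightarrow> real" where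
  "gg f x = (if x \<in> linf then Sup (SS f x) else f x)"

lemma linf_iff: "x \<in> linf \<longleftrightarrow> (\<exists>B. \<forall>a. \<bar>x a\<bar> \<le> B)"
  unfolding linf_def bounded_iff by auto

lemma linf_scale:
  assumes "x \<in> linf" shows "(\<lambda>a. t * x a) \<in> linf"
proof -
  obtain B where B: "\<forall>a. \<bar>x a\<bar> \<le> B" using assms linf_iff by blast
  have "\<forall>a. \<bar>t * x a\<bar> \<le> \<bar>t\<bar> * B"
    using B by (simp add: abs_mult mult_left_mono)
  then show ?thesis using linf_iff by blast
qed

lemma linf_sum:
  fixes xs :: "nat \<Rightarrow> 'a \<Rightarrow> real"
  assumes "\<forall>k<n. xs k \<in> linf" shows "(\<lambda>a. \<Sum>k<n. xs k a) \<in> linf"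
  using assms
proof (induction n)
  case 0
  then show ?case by (auto simp: linf_iff)
next
  case (Suc n)
  then have h1: "(\<lambda>a. \<Sum>k<n. xs k a) \<in> linf" and h2: "xs n \<in> linf" by auto
  obtain B1 where B1: "\<forall>a. \<bar>\<Sum>k<n. xs k a\<bar> \<le> B1" using h1 unfolding linf_iff by blast
  obtain B2 where B2: "\<forall>a. \<bar>xs n a\<bar> \<le> B2" using h2 unfolding linf_iff by blast
  have "\<forall>a. \<bar>\<Sum>k<Suc n. xs k a\<bar> \<le> B1 + B2"
  proof
    fix a
    have "\<bar>\<Sum>k<Suc n. xs k a\<bar> \<le> \<bar>\<Sum>k<n. xs k a\<bar> + \<bar>xs n a\<bar>" by simp
    also have "\<dots> \<le> B1 + B2" using B1 B2 by (meson add_mono)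
    finally show "\<bar>\<Sum>k<Suc n. xs k a\<bar> \<le> B1 + B2" .
  qed
  then show ?case using linf_iff by blast
qed

lemma fbl_upper:
  fixes xs :: "nat \<Rightarrow> 'a \<Rightarrow> real"
  assumes "\<forall>k<n. xs k \<in> linf" "\<forall>a. (\<Sum>k<n. \<bar>xs k a\<bar>) \<le> 1"
  shows "ereal (\<Sum>k<n. \<bar>f (xs k)\<bar>) \<le> fbl_norm f"
  unfolding fbl_norm_def
  by (rule SUP_upper2[where i="(n,xs)"]) (use assms in auto)

lemma fbl_real:
  assumes "fbl_norm f < \<infinity>"
  shows "fbl_norm f = ereal (real_of_ereal (fbl_norm f))"
proof -
  have "ereal (\<Sum>k<(0::nat). \<bar>f (xs k)\<bar>) \<le> fbl_norm f" for xs
    by (rule fbl_upper) auto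
  then have "0 \<le> fbl_norm f" by (simp add: zero_ereal_def)
  then show ?thesis using assms by (cases "fbl_norm f") auto
qed

lemma fbl_le_real:
  fixes xs :: "nat \<Rightarrow> 'a \<Rightarrow> real"
  assumes "fbl_norm f < \<infinity>" "\<forall>k<n. xs k \<in> linf" "\<forall>a. (\<Sum>k<n. \<bar>xs k a\<bar>) \<le> 1"
  shows "(\<Sum>k<n. \<bar>f (xs k)\<bar>) \<le> real_of_ereal (fbl_norm f)"
proof -
  have "ereal (\<Sum>k<n. \<bar>f (xs k)\<bar>) \<le> ereal (real_of_ereal (fbl_norm f))"
    using fbl_upper[OF assms(2,3)] fbl_real[OF assms(1)] by simp
  then show ?thesis by simp
qed

lemma fbl_le_fin:
  fixes zs :: "'b \<Rightarrow> 'a \<Rightarrow> real"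
  assumes "fbl_norm f < \<infinity>" "finite I" "\<forall>i\<in>I. zs i \<in> linf"
    "\<forall>a. (\<Sum>i\<in>I. \<bar>zs i a\<bar>) \<le> 1"
  shows "(\<Sum>i\<in>I. \<bar>f (zs i)\<bar>) \<le> real_of_ereal (fbl_norm f)"
proof -
  obtain h where h: "bij_betw h {0..<card I} I" using ex_bij_betw_nat_finite[OF assms(2)] by blast
  have hI: "\<forall>k<card I. h k \<in> I" using h by (auto simp: bij_betw_def)
  have e: "(\<Sum>k<card I. g (h k)) = (\<Sum>i\<in>I. g i)" for g :: "'b \<Rightarrow> real"
    using sum.reindex_bij_betw[OF h, of g] by (simp add: lessThan_atLeast0)
  have "(\<Sum>k<card I. \<bar>f (zs (h k))\<bar>) \<le> real_of_ereal (fbl_norm f)"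
    apply (rule fbl_le_real[OF assms(1)])
    using hI assms(3) apply auto[1]
    using assms(4) e[of "\<lambda>i. \<bar>zs i _\<bar>"] by auto
  then show ?thesis using e[of "\<lambda>i. \<bar>f (zs i)\<bar>"] by simp
qed

lemma homog:
  assumes "pos_homog f" "x \<in> linf" "t > 0"
  shows "f (\<lambda>a. t * x a) = t * f x"
  using assms unfolding pos_homog_def by blast

lemma SS_zero: "0 \<in> SS f x"
  unfolding SS_def by (rule CollectI, rule exI[of _ 0]) auto

lemma SS_single: "y \<in> linf \<Longrightarrow> \<forall>a. \<bar>y a\<bar> \<le> \<bar>x a\<bar> \<Longrightarrow> f y \<in> SS f x"
  unfolding SS_def
  by (rule CollectI, rule exI[of _ 1], rule exI[of _ "\<lambda>_. y"]) auto

lemma SS_bdd: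
  assumes "pos_homog f" "fbl_norm f < \<infinity>" "x \<in> linf"
  shows "bdd_above (SS f x)"
proof -
  obtain B where B: "\<forall>a. \<bar>x a\<bar> \<le> B" using assms(3) linf_iff by blast
  have B0: "0 \<le> B" using B[rule_format, of undefined] by linarith
  define M where "M = B + 1"
  have M0: "M > 0" using B0 M_def by simp
  define F where "F = real_of_ereal (fbl_norm f)"
  have "s \<le> M * F" if s: "s \<in> SS f x" for s
  proof -
    obtain n ys where s_eq: "s = (\<Sum>k<(n::nat). f (ys k))" and ys: "\<forall>k<n. ys k \<in> linf"
      and yb: "\<forall>a. (\<Sum>k<n. \<bar>ys k a\<bar>) \<le> \<bar>x a\<bar>"
      using s unfolding SS_def by blast
    define zs where "zs k = (\<lambda>a. (1/M) * ys k a)" for k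
    have zl: "\<forall>k<n. zs k \<in> linf" unfolding zs_def using ys linf_scale by blast
    have zb: "\<forall>a. (\<Sum>k<n. \<bar>zs k a\<bar>) \<le> 1"
    proof
      fix a
      have "(\<Sum>k<n. \<bar>zs k a\<bar>) = (1/M) * (\<Sum>k<n. \<bar>ys k a\<bar>)"
        using M0 by (simp add: zs_def abs_mult sum_distrib_left)
      also have "\<dots> \<le> (1/M) * B" using yb B M0
        by (meson dual_order.trans less_eq_real_def mult_left_mono zero_less_divide_1_iff)
      also have "\<dots> \<le> 1" using M0 M_def by (simp add: field_simps)
      finally show "(\<Sum>k<n. \<bar>zs k a\<bar>) \<le> 1" .
    qed
    have fz: "\<forall>k<n. f (zs k) = (1/M) * f (ys k)"
      unfolding zs_def using homog[OF assms(1)] ys M0 by (simp del: times_divide_eq_left times_divide_eq_right)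
    have "s = M * (\<Sum>k<n. f (zs k))"
      using fz M0 by (simp add: s_eq sum_distrib_left)
    also have "\<dots> \<le> M * (\<Sum>k<n. \<bar>f (zs k)\<bar>)"
      using M0 by (intro mult_left_mono sum_mono) auto
    also have "\<dots> \<le> M * F"
      using fbl_le_real[OF assms(2) zl zb] M0 F_def by (intro mult_left_mono) auto
    finally show ?thesis .
  qed
  then show ?thesis by (rule bdd_aboveI)
qed

lemma SS_scale:
  assumes "pos_homog f" "x \<in> linf" "t > 0" "bdd_above (SS f x)"
    "s \<in> SS f (\<lambda>a. t * x a)"
  shows "s \<le> t * Sup (SS f x)"
proof -
  obtain n ys where s_eq: "s = (\<Sum>k<(n::nat). f (ys k))" and ys: "\<forall>k<n. ys k \<in> linf"
    and yb: "\<forall>a. (\<Sum>k<n. \<bar>ys k a\<bar>) \<le> \<bar>t * x a\<bar>"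
    using assms(5) unfolding SS_def by blast
  define zs where "zs k = (\<lambda>a. (1/t) * ys k a)" for k
  have zl: "\<forall>k<n. zs k \<in> linf" unfolding zs_def using ys linf_scale by blast
  have zb: "\<forall>a. (\<Sum>k<n. \<bar>zs k a\<bar>) \<le> \<bar>x a\<bar>"
  proof
    fix a
    have "(\<Sum>k<n. \<bar>zs k a\<bar>) = (1/t) * (\<Sum>k<n. \<bar>ys k a\<bar>)"
      using assms(3) by (simp add: zs_def abs_mult sum_distrib_left)
    also have "\<dots> \<le> (1/t) * \<bar>t * x a\<bar>" using yb assms(3)
      by (simp add: divide_right_mono)
    also have "\<dots> = \<bar>x a\<bar>" using assms(3) by (simp add: abs_mult)
    finally show "(\<Sum>k<n. \<bar>zs k a\<bar>) \<le> \<bar>x a\<bar>" .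
  qed
  have fz: "\<forall>k<n. f (zs k) = (1/t) * f (ys k)"
    unfolding zs_def using homog[OF assms(1)] ys assms(3) by (simp del: times_divide_eq_left times_divide_eq_right)
  have mem: "(\<Sum>k<n. f (zs k)) \<in> SS f x"
    unfolding SS_def using zl zb by blast
  have "s = t * (\<Sum>k<n. f (zs k))"
    using fz assms(3) by (simp add: s_eq sum_distrib_left)
  also have "\<dots> \<le> t * Sup (SS f x)"
    using cSup_upper[OF mem assms(4)] assms(3) by simp
  finally show ?thesis .
qed

lemma sum_Sup_le:
  fixes S :: "nat \<Rightarrow> real set"
  shows "(\<forall>i<n. S i \<noteq> {} \<and> bdd_above (S i)) \<Longrightarrow>
    (\<forall>ss. (\<forall>i<n. ss i \<in> S i) \<longrightarrow> (\<Sum>i<n. ss i) \<le> B) \<Longrightarrow> (\<Sum>i<n. Sup (S i)) \<le> B"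
proof (induction n arbitrary: B)
  case 0
  then show ?case by (metis lessThan_0 not_less0 sum.empty)
next
  case (Suc n)
  have "Sup (S n) \<le> B - (\<Sum>i<n. Sup (S i))"
  proof (rule cSup_least)
    show "S n \<noteq> {}" using Suc.prems by auto
  next
    fix s assume s: "s \<in> S n"
    have "(\<Sum>i<n. Sup (S i)) \<le> B - s"
    proof (rule Suc.IH)
      show "\<forall>i<n. S i \<noteq> {} \<and> bdd_above (S i)" using Suc.prems by auto
      show "\<forall>ss. (\<forall>i<n. ss i \<in> S i) \<longrightarrow> (\<Sum>i<n. ss i) \<le> B - s"
      proof (intro allI impI)
        fix ss assume ss: "\<forall>i<n. ss i \<in> S i"
        have "\<forall>i<Suc n. (ss(n := s)) i \<in> S i" using ss s less_Suc_eq by auto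
        then have "(\<Sum>i<Suc n. (ss(n := s)) i) \<le> B" using Suc.prems by blast
        moreover have "(\<Sum>i<n. (ss(n := s)) i) = (\<Sum>i<n. ss i)" by (rule sum.cong) auto
        ultimately show "(\<Sum>i<n. ss i) \<le> B - s" by simp
      qed
    qed
    then show "s \<le> B - (\<Sum>i<n. Sup (S i))" by simp
  qed
  then show ?case by simp
qed

lemma key:
  assumes "f \<in> H0_pos"
  shows "gg f \<in> H0_pos" "\<forall>x\<in>linf. f x \<le> gg f x" "fbl_norm (gg f) = fbl_norm f"
proof -
  have ph: "pos_homog f" and fb: "fbl_norm f < \<infinity>" and fp: "\<forall>x\<in>linf. 0 \<le> f x"
    using assms unfolding H0_pos_def H0_def by auto
  have bdd: "\<And>x. x \<in> linf \<Longrightarrow> bdd_above (SS f x)" by (rule SS_bdd[OF ph fb])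
  have ne: "SS f x \<noteq> {}" for x using SS_zero by blast
  show le: "\<forall>x\<in>linf. f x \<le> gg f x"
  proof
    fix x :: "'a \<Rightarrow> real" assume x: "x \<in> linf"
    have "f x \<in> SS f x" by (rule SS_single[OF x]) simp
    then have "f x \<le> Sup (SS f x)" by (rule cSup_upper[OF _ bdd[OF x]])
    then show "f x \<le> gg f x" using x unfolding gg_def by simp
  qed
  have gp: "\<forall>x\<in>linf. 0 \<le> gg f x"
  proof
    fix x :: "'a \<Rightarrow> real" assume x: "x \<in> linf"
    have "0 \<le> Sup (SS f x)" by (rule cSup_upper[OF SS_zero bdd[OF x]])
    then show "0 \<le> gg f x" using x unfolding gg_def by simp
  qed
  have sc: "Sup (SS f (\<lambda>a. t * x a)) \<le> t * Sup (SS f x)" if "x \<in> linf" "t > 0" for x t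
    using SS_scale[OF ph that bdd[OF that(1)]] ne by (intro cSup_least) auto
  have gh: "pos_homog (gg f)"
    unfolding pos_homog_def
  proof (intro ballI allI impI)
    fix x :: "'a \<Rightarrow> real" and t :: real assume x: "x \<in> linf" and t: "t > 0"
    have tx: "(\<lambda>a. t * x a) \<in> linf" using linf_scale[OF x] .
    have e: "(\<lambda>a. (1/t) * (t * x a)) = x" using t by auto
    have "Sup (SS f x) \<le> (1/t) * Sup (SS f (\<lambda>a. t * x a))"
      using sc[OF tx, of "1/t"] t e by simp
    then have "t * Sup (SS f x) \<le> Sup (SS f (\<lambda>a. t * x a))"
      using t by (simp add: field_simps)
    then show "gg f (\<lambda>a. t * x a) = t * gg f x"
      using sc[OF x t] x tx unfolding gg_def by simp
  qed
  define F where "F = real_of_ereal (fbl_norm f)"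
  have up: "fbl_norm (gg f) \<le> fbl_norm f"
    unfolding fbl_norm_def[of "gg f"]
  proof (rule SUP_least, clarify)
    fix n and xs :: "nat \<Rightarrow> 'a \<Rightarrow> real"
    assume xl: "\<forall>k<n. xs k \<in> linf" and xb: "\<forall>a. (\<Sum>k<n. \<bar>xs k a\<bar>) \<le> 1"
    have "(\<Sum>k<n. Sup (SS f (xs k))) \<le> F"
    proof (rule sum_Sup_le)
      show "\<forall>i<n. SS f (xs i) \<noteq> {} \<and> bdd_above (SS f (xs i))" using ne bdd xl by auto
      show "\<forall>ss. (\<forall>i<n. ss i \<in> SS f (xs i)) \<longrightarrow> (\<Sum>i<n. ss i) \<le> F"
      proof (intro allI impI)
        fix ss assume ss: "\<forall>i<n. ss i \<in> SS f (xs i)"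
        have "\<forall>i\<in>{..<n}. \<exists>p::nat \<times> (nat \<Rightarrow> 'a \<Rightarrow> real). ss i = (\<Sum>k<fst p. f (snd p k)) \<and> (\<forall>k<fst p. snd p k \<in> linf)
            \<and> (\<forall>a. (\<Sum>k<fst p. \<bar>snd p k a\<bar>) \<le> \<bar>xs i a\<bar>)"
        proof
          fix i assume "i \<in> {..<n}"
          then have "ss i \<in> SS f (xs i)" using ss by simp
          then obtain mm :: nat and YY where "ss i = (\<Sum>k<mm. f (YY k))" "\<forall>k<mm. YY k \<in> linf"
            "\<forall>a. (\<Sum>k<mm. \<bar>YY k a\<bar>) \<le> \<bar>xs i a\<bar>"
            unfolding SS_def by blast
          then show "\<exists>p::nat \<times> (nat \<Rightarrow> 'a \<Rightarrow> real). ss i = (\<Sum>k<fst p. f (snd p k)) \<and> (\<forall>k<fst p. snd p k \<in> linf)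
            \<and> (\<forall>a. (\<Sum>k<fst p. \<bar>snd p k a\<bar>) \<le> \<bar>xs i a\<bar>)"
            by (intro exI[of _ "(mm,YY)"]) simp
        qed
        from bchoice[OF this] obtain P :: "nat \<Rightarrow> nat \<times> (nat \<Rightarrow> 'a \<Rightarrow> real)" where P: "\<forall>i\<in>{..<n}. ss i = (\<Sum>k<fst (P i). f (snd (P i) k)) \<and> (\<forall>k<fst (P i). snd (P i) k \<in> linf)
            \<and> (\<forall>a. (\<Sum>k<fst (P i). \<bar>snd (P i) k a\<bar>) \<le> \<bar>xs i a\<bar>)" by blast
        define m where "m i = fst (P i)" for i
        define Y where "Y i = snd (P i)" for i
        have mY: "\<forall>i<n. ss i = (\<Sum>k<m i. f (Y i k)) \<and> (\<forall>k<m i. Y i k \<in> linf)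
            \<and> (\<forall>a. (\<Sum>k<m i. \<bar>Y i k a\<bar>) \<le> \<bar>xs i a\<bar>)"
          using P unfolding m_def Y_def by simp
        define I where "I = Sigma {..<n} (\<lambda>i. {..<m i})"
        define zs where "zs p = Y (fst p) (snd p)" for p
        have fI: "finite I" unfolding I_def by (intro finite_SigmaI) auto
        have sg: "(\<Sum>i<n. \<Sum>k<m i. h i k) = (\<Sum>p\<in>I. h (fst p) (snd p))" for h :: "nat \<Rightarrow> nat \<Rightarrow> real"
          unfolding I_def by (subst sum.Sigma) (auto simp: split_def)
        have zl: "\<forall>p\<in>I. zs p \<in> linf" using mY unfolding I_def zs_def by auto
        have zb: "\<forall>a. (\<Sum>p\<in>I. \<bar>zs p a\<bar>) \<le> 1"
        proof
          fix a
          have "(\<Sum>p\<in>I. \<bar>zs p a\<bar>) = (\<Sum>i<n. \<Sum>k<m i. \<bar>Y i k a\<bar>)"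
            using sg[of "\<lambda>i k. \<bar>Y i k a\<bar>"] unfolding zs_def by simp
          also have "\<dots> \<le> (\<Sum>i<n. \<bar>xs i a\<bar>)" using mY by (intro sum_mono) auto
          also have "\<dots> \<le> 1" using xb by simp
          finally show "(\<Sum>p\<in>I. \<bar>zs p a\<bar>) \<le> 1" .
        qed
        have "(\<Sum>i<n. ss i) = (\<Sum>i<n. \<Sum>k<m i. f (Y i k))" using mY by simp
        also have "\<dots> \<le> (\<Sum>i<n. \<Sum>k<m i. \<bar>f (Y i k)\<bar>)" by (intro sum_mono) auto
        also have "\<dots> = (\<Sum>p\<in>I. \<bar>f (zs p)\<bar>)" using sg[of "\<lambda>i k. \<bar>f (Y i k)\<bar>"] unfolding zs_def by simp
        also have "\<dots> \<le> F" unfolding F_def by (rule fbl_le_fin[OF fb fI zl zb])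
        finally show "(\<Sum>i<n. ss i) \<le> F" .
      qed
    qed
    moreover have "(\<Sum>k<n. \<bar>gg f (xs k)\<bar>) = (\<Sum>k<n. Sup (SS f (xs k)))"
      using gp xl unfolding gg_def by (intro sum.cong) auto
    ultimately have "ereal (\<Sum>k<n. \<bar>gg f (xs k)\<bar>) \<le> ereal F" by simp
    then show "ereal (\<Sum>k<n. \<bar>gg f (xs k)\<bar>) \<le> fbl_norm f"
      using fbl_real[OF fb] F_def by simp
  qed
  have lo: "fbl_norm f \<le> fbl_norm (gg f)"
    unfolding fbl_norm_def
  proof (rule SUP_subset_mono[OF order_refl], clarify)
    fix n and xs :: "nat \<Rightarrow> 'a \<Rightarrow> real"
    assume xl: "\<forall>k<n. xs k \<in> linf" and xb: "\<forall>a. (\<Sum>k<n. \<bar>xs k a\<bar>) \<le> 1"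
    have "(\<Sum>k<n. \<bar>f (xs k)\<bar>) \<le> (\<Sum>k<n. \<bar>gg f (xs k)\<bar>)"
      proof (rule sum_mono)
      fix k assume "k \<in> {..<n}"
      then have k: "xs k \<in> linf" using xl by simp
      have "\<bar>f (xs k)\<bar> = f (xs k)" using fp k by simp
      also have "\<dots> \<le> gg f (xs k)" using le k by blast
      also have "\<dots> \<le> \<bar>gg f (xs k)\<bar>" by (rule abs_ge_self)
      finally show "\<bar>f (xs k)\<bar> \<le> \<bar>gg f (xs k)\<bar>" .
    qed
    then show "ereal (\<Sum>k<n. \<bar>f (xs k)\<bar>) \<le> ereal (\<Sum>k<n. \<bar>gg f (xs k)\<bar>)" by simp
  qed
  show eq: "fbl_norm (gg f) = fbl_norm f" using up lo by simp
  show "gg f \<in> H0_pos" unfolding H0_pos_def H0_def using gh gp eq fb by simp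
qed

theorem lemma4p5:
  fixes f :: "('a \<Rightarrow> real) \<Rightarrow> real"
  assumes "maximal_elem f"
  shows "(\<forall>x\<in>linf. \<forall>y\<in>linf. (\<forall>a. \<bar>x a\<bar> \<le> \<bar>y a\<bar>) \<longrightarrow> f x \<le> f y)
    \<and> (\<forall>(n::nat) (xs::nat \<Rightarrow> 'a \<Rightarrow> real).
          (\<forall>k<n. xs k \<in> linf \<and> (\<forall>a. 0 \<le> xs k a)) \<longrightarrow>
          (\<Sum>k<n. f (xs k)) \<le> f (\<lambda>a. \<Sum>k<n. xs k a))
    \<and> fbl_norm f = sup_norm f"
proof -
  have fH: "f \<in> H0_pos" using assms unfolding maximal_elem_def by blast
  have ph: "pos_homog f" and fb: "fbl_norm f < \<infinity>" and fp: "\<forall>x\<in>linf. 0 \<le> f x"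
    using fH unfolding H0_pos_def H0_def by auto
  have bdd: "\<And>x. x \<in> linf \<Longrightarrow> bdd_above (SS f x)" by (rule SS_bdd[OF ph fb])
  have gf: "\<forall>x\<in>linf. gg f x = f x"
  proof -
    have "\<forall>g\<in>H0_pos. (\<forall>x\<in>linf. f x \<le> g x) \<and> fbl_norm g = fbl_norm f
        \<longrightarrow> (\<forall>x\<in>linf. g x = f x)" using assms unfolding maximal_elem_def by blast
    then show ?thesis using key[OF fH] by blast
  qed
  have SF: "s \<le> f x" if "x \<in> linf" "s \<in> SS f x" for s x
    using cSup_upper[OF that(2) bdd[OF that(1)]] gf that(1) unfolding gg_def by simp
  have P1: "\<forall>x\<in>linf. \<forall>y\<in>linf. (\<forall>a. \<bar>x a\<bar> \<le> \<bar>y a\<bar>) \<longrightarrow> f x \<le> f y"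
  proof (intro ballI impI)
    fix x y :: "'a \<Rightarrow> real" assume "x \<in> linf" "y \<in> linf" "\<forall>a. \<bar>x a\<bar> \<le> \<bar>y a\<bar>"
    then show "f x \<le> f y" using SF[of y "f x"] SS_single[of x y f] by blast
  qed
  have P2: "\<forall>(n::nat) (xs::nat \<Rightarrow> 'a \<Rightarrow> real).
          (\<forall>k<n. xs k \<in> linf \<and> (\<forall>a. 0 \<le> xs k a)) \<longrightarrow>
          (\<Sum>k<n. f (xs k)) \<le> f (\<lambda>a. \<Sum>k<n. xs k a)"
  proof (intro allI impI)
    fix n and xs :: "nat \<Rightarrow> 'a \<Rightarrow> real"
    assume h: "\<forall>k<n. xs k \<in> linf \<and> (\<forall>a. 0 \<le> xs k a)"
    have sl: "(\<lambda>a. \<Sum>k<n. xs k a) \<in> linf" using h linf_sum by blast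
    have "\<forall>a. (\<Sum>k<n. \<bar>xs k a\<bar>) \<le> \<bar>\<Sum>k<n. xs k a\<bar>"
    proof
      fix a
      have "(\<Sum>k<n. \<bar>xs k a\<bar>) = (\<Sum>k<n. xs k a)" using h by (intro sum.cong) auto
      then show "(\<Sum>k<n. \<bar>xs k a\<bar>) \<le> \<bar>\<Sum>k<n. xs k a\<bar>" by simp
    qed
    then have "(\<Sum>k<n. f (xs k)) \<in> SS f (\<lambda>a. \<Sum>k<n. xs k a)"
      unfolding SS_def using h by blast
    then show "(\<Sum>k<n. f (xs k)) \<le> f (\<lambda>a. \<Sum>k<n. xs k a)" using SF sl by blast
  qed
  define one :: "'a \<Rightarrow> real" where "one = (\<lambda>a. 1)"
  have ol: "one \<in> linf" unfolding one_def linf_iff by auto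
  have f1: "fbl_norm f = ereal (f one)"
  proof (rule antisym)
    show "fbl_norm f \<le> ereal (f one)"
      unfolding fbl_norm_def
    proof (rule SUP_least, clarify)
      fix n and xs :: "nat \<Rightarrow> 'a \<Rightarrow> real"
      assume xl: "\<forall>k<n. xs k \<in> linf" and xb: "\<forall>a. (\<Sum>k<n. \<bar>xs k a\<bar>) \<le> 1"
      have "(\<Sum>k<n. \<bar>f (xs k)\<bar>) = (\<Sum>k<n. f (xs k))" using xl fp by (intro sum.cong) auto
      moreover have "(\<Sum>k<n. f (xs k)) \<in> SS f one"
        unfolding SS_def one_def using xl xb by auto
      ultimately show "ereal (\<Sum>k<n. \<bar>f (xs k)\<bar>) \<le> ereal (f one)" using SF ol by simp
    qed
    show "ereal (f one) \<le> fbl_norm f"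
      using fbl_upper[of 1 "\<lambda>_. one" f] ol fp by (simp add: one_def)
  qed
  have s1: "sup_norm f = ereal (f one)"
    unfolding sup_norm_def
  proof (rule antisym)
    show "(SUP x\<in>{x. \<forall>a. \<bar>x a\<bar> \<le> 1}. ereal \<bar>f x\<bar>) \<le> ereal (f one)"
    proof (rule SUP_least)
      fix x :: "'a \<Rightarrow> real" assume "x \<in> {x. \<forall>a. \<bar>x a\<bar> \<le> 1}"
      then have x: "\<forall>a. \<bar>x a\<bar> \<le> 1" by simp
      then have xl: "x \<in> linf" using linf_iff by blast
      have "f x \<le> f one" using P1 xl ol x by (simp add: one_def)
      then show "ereal \<bar>f x\<bar> \<le> ereal (f one)" using fp xl by simp
    qed
    show "ereal (f one) \<le> (SUP x\<in>{x. \<forall>a. \<bar>x a\<bar> \<le> 1}. ereal \<bar>f x\<bar>)"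
      by (rule SUP_upper2[where i=one]) (use fp ol in \<open>auto simp: one_def\<close>)
  qed
  show ?thesis using P1 P2 f1 s1 by simp
qed

end
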